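(* Let $X$ be a real Banach space and $T:X\rightrightarrows X^*$ a monotone operator whose domain $D_T$ is bounded. Consider the conditions: (i) for every $x\in X$ with $x\notin\overline{D_T}$, $\sup\left\{\frac{\langle z^*,x-z\rangle}{\|x-z\|} : (z,z^* )\in G(T)\right\}=\infty$; (ii) $\pi_1\,\mathrm{dom}\,\varphi_T\subset\overline{D_T}$; (iii) $\overline{D_T}=\overline{\mathrm{co}\,D_T}=\overline{\pi_1\,\mathrm{dom}\,\varphi_T}$; (iv) $\overline{D_T}$ is convex. Then (i), (ii), (iii) are equivalent, and each implies (iv). If moreover $T$ is maximal monotone, then all four conditions (i)–(iv) are equivalent.
   Context: $X$ is a real Banach space with topological dual $X^*$ and pairing $\langle x,x^*\rangle$. A (multivalued) operator $T:X\rightrightarrows X^*$ has graph $G(T)=\{(x,x^* ):x^*\in T(x)\}$, domain $D_T=\{x:T(x)\neq\emptyset\}$ and range $R_T=\bigcup_{x}T(x)$. $T$ is monotone if $\langle x^*-y^*,x-y\rangle\ge0$ for all $(x,x^* ),(y,y^* )\in G(T)$; it is maximal monotone if no monotone operator has a graph strictly containing $G(T)$. The Fitzpatrick function of a monotone $T$ is $\varphi_T(x,x^* )=\sup\{\langle x^*-z^*,z-x\rangle:(z,z^* )\in G(T)\}+\langle x^*,x\rangle$, $\mathrm{dom}\,\varphi_T=\{(x,x^* ):\varphi_T(x,x^* )<\infty\}$, and $\pi_1:X\times X^*\to X$, $\pi_2:X\times X^*\to X^*$ are the projections. $\mathrm{co}$ denotes convex hull and bars denote norm closure. *)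

theory Defs
  imports "HOL-Analysis.Analysis"
begin

text \<open>X is a real Banach space ('a::banach); its dual X* is 'a blinfun (bounded linear to real);
  the pairing is blinfun_apply. A multivalued operator is T :: 'a \<Rightarrow> a set of functionals.\<close>

definition graph_op :: "('a::real_normed_vector \<Rightarrow> ('a \<Rightarrow>\<^sub>L real) set) \<Rightarrow> ('a \<times> ('a \<Rightarrow>\<^sub>L real)) set" where
  "graph_op T = {(x, xs). xs \<in> T x}"

definition dom_op :: "('a::real_normed_vector \<Rightarrow> ('a \<Rightarrow>\<^sub>L real) set) \<Rightarrow> 'a set" where
  "dom_op T = {x. T x \<noteq> {}}"

definition range_op :: "('a::real_normed_vector \<Rightarrow> ('a \<Rightarrow>\<^sub>L real) set) \<Rightarrow> ('a \<Rightarrow>\<^sub>L real) set" where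
  "range_op T = (\<Union>x. T x)"

definition monotone_op :: "('a::real_normed_vector \<Rightarrow> ('a \<Rightarrow>\<^sub>L real) set) \<Rightarrow> bool" where
  "monotone_op T \<longleftrightarrow>
     (\<forall>(x, xs)\<in>graph_op T. \<forall>(y, ys)\<in>graph_op T. blinfun_apply (xs - ys) (x - y) \<ge> 0)"

definition maximal_monotone_op :: "('a::real_normed_vector \<Rightarrow> ('a \<Rightarrow>\<^sub>L real) set) \<Rightarrow> bool" where
  "maximal_monotone_op T \<longleftrightarrow> monotone_op T \<and>
     (\<forall>S. monotone_op S \<and> graph_op T \<subseteq> graph_op S \<longrightarrow> graph_op S = graph_op T)"

definition fitzpatrick :: "('a::real_normed_vector \<Rightarrow> ('a \<Rightarrow>\<^sub>L real) set) \<Rightarrow> 'a \<Rightarrow> ('a \<Rightarrow>\<^sub>L real) \<Rightarrow> ereal" where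
  "fitzpatrick T x xs =
     (SUP (z, zs)\<in>graph_op T. ereal (blinfun_apply (xs - zs) (z - x))) + ereal (blinfun_apply xs x)"

definition dom_fitzpatrick :: "('a::real_normed_vector \<Rightarrow> ('a \<Rightarrow>\<^sub>L real) set) \<Rightarrow> ('a \<times> ('a \<Rightarrow>\<^sub>L real)) set" where
  "dom_fitzpatrick T = {(x, xs). fitzpatrick T x xs < \<infinity>}"

end

theory Submission
  imports Defs
begin


definition sublin :: "('a::real_vector \<Rightarrow> real) \<Rightarrow> ('a \<Rightarrow> real) \<Rightarrow> bool" where
  "sublin p q \<longleftrightarrow> (\<forall>v w. q (v + w) \<le> q v + q w) \<and> (\<forall>c v. c > 0 \<longrightarrow> q (c *\<^sub>R v) \<le> c * q v)
     \<and> (\<forall>v. q v \<le> p v)"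

lemma sublin_0:
  assumes "sublin p q" "p 0 \<le> 0" shows "q 0 = 0"
proof -
  have "q (0 + 0) \<le> q 0 + q 0" "q 0 \<le> p 0" using assms(1) unfolding sublin_def by blast+
  then show ?thesis using assms(2) by simp
qed

lemma sublin_hom:
  assumes "sublin p q" "p 0 \<le> 0" "c \<ge> 0" shows "q (c *\<^sub>R v) = c * q v"
proof (cases "c = 0")
  case True then show ?thesis using sublin_0[OF assms(1,2)] by simp
next
  case False
  then have c: "c > 0" using assms(3) by simp
  have 1: "q (c *\<^sub>R v) \<le> c * q v" using assms(1) c unfolding sublin_def by blast
  have "q (inverse c *\<^sub>R (c *\<^sub>R v)) \<le> inverse c * q (c *\<^sub>R v)"
    using assms(1) c unfolding sublin_def by (meson positive_imp_inverse_positive)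
  then have "q v \<le> inverse c * q (c *\<^sub>R v)" using c by simp
  then have "c * q v \<le> q (c *\<^sub>R v)" using c by (simp add: field_simps)
  with 1 show ?thesis by simp
qed

lemma sublin_lb:
  assumes "sublin p q" "p 0 \<le> 0" shows "q v \<ge> - p (- v)"
proof -
  have "q (v + - v) \<le> q v + q (- v)" "q (- v) \<le> p (- v)" using assms(1) unfolding sublin_def by blast+
  then show ?thesis using sublin_0[OF assms] by simp
qed

lemma sublin_minimal_linear:
  assumes sm: "sublin p m" and p0: "p 0 \<le> 0"
    and minimal: "\<And>q. sublin p q \<Longrightarrow> (\<forall>v. q v \<le> m v) \<Longrightarrow> q = m"
  shows "linear m"
proof -
  have sup: "m (v + a) \<ge> m v + m a" for v a
  proof -
    define q where "q v = (INF t\<in>{0::real..}. m (v + t *\<^sub>R a) - t * m a)" for v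
    have bdd: "bdd_below ((\<lambda>t. m (v + t *\<^sub>R a) - t * m a) ` {0..})" for v
    proof (rule bdd_belowI2)
      fix t :: real assume "t \<in> {0..}"
      then have t: "t \<ge> 0" by simp
      have "m (t *\<^sub>R a) \<le> m (v + t *\<^sub>R a) + m (- v)"
      proof -
        have "t *\<^sub>R a = (v + t *\<^sub>R a) + (- v)" by simp
        then show ?thesis using sm unfolding sublin_def by metis
      qed
      moreover have "m (- v) \<le> p (- v)" using sm unfolding sublin_def by blast
      ultimately show "- p (- v) \<le> m (v + t *\<^sub>R a) - t * m a"
        using sublin_hom[OF sm p0 t] by simp
    qed
    have le: "q v \<le> m (v + t *\<^sub>R a) - t * m a" if "t \<ge> 0" for v t
      unfolding q_def using cINF_lower[OF bdd, of t] that by simp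
    have ge: "z \<le> q v" if "\<And>t. t \<ge> 0 \<Longrightarrow> z \<le> m (v + t *\<^sub>R a) - t * m a" for z v
      unfolding q_def by (rule cINF_greatest) (use that in auto)
    have "sublin p q"
      unfolding sublin_def
    proof (intro conjI allI impI)
      fix v w
      show "q (v + w) \<le> q v + q w"
      proof -
        have "q (v + w) - (m (w + s *\<^sub>R a) - s * m a) \<le> q v" if s: "s \<ge> 0" for s
        proof (rule ge)
          fix t :: real assume t: "t \<ge> 0"
          have "q (v + w) \<le> m (v + w + (t + s) *\<^sub>R a) - (t + s) * m a"
            using le t s by simp
          also have "m (v + w + (t + s) *\<^sub>R a) \<le> m (v + t *\<^sub>R a) + m (w + s *\<^sub>R a)"
          proof -
            have "v + w + (t + s) *\<^sub>R a = (v + t *\<^sub>R a) + (w + s *\<^sub>R a)"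
              by (simp add: algebra_simps)
            then show ?thesis using sm unfolding sublin_def by metis
          qed
          finally show "q (v + w) - (m (w + s *\<^sub>R a) - s * m a) \<le> m (v + t *\<^sub>R a) - t * m a"
            by (simp add: algebra_simps)
        qed
        then have "q (v + w) - q v \<le> m (w + s *\<^sub>R a) - s * m a" if "s \<ge> 0" for s
          using that by fastforce
        then have "q (v + w) - q v \<le> q w" by (rule ge)
        then show ?thesis by simp
      qed
    next
      fix c :: real and v assume c: "c > 0"
      have "q (c *\<^sub>R v) / c \<le> q v"
      proof (rule ge)
        fix t :: real assume t: "t \<ge> 0"
        have "q (c *\<^sub>R v) \<le> m (c *\<^sub>R v + (c * t) *\<^sub>R a) - (c * t) * m a"
          using le c t by simp
        also have "m (c *\<^sub>R v + (c * t) *\<^sub>R a) = c * m (v + t *\<^sub>R a)"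
          using sublin_hom[OF sm p0, of c "v + t *\<^sub>R a"] c by (simp add: scaleR_add_right)
        finally show "q (c *\<^sub>R v) / c \<le> m (v + t *\<^sub>R a) - t * m a"
          using c by (simp add: field_simps)
      qed
      then show "q (c *\<^sub>R v) \<le> c * q v" using c by (simp add: field_simps)
    next
      fix v
      have "q v \<le> m v" using le[of 0 v] by simp
      also have "\<dots> \<le> p v" using sm unfolding sublin_def by blast
      finally show "q v \<le> p v" .
    qed
    moreover have "\<forall>v. q v \<le> m v" using le[of 0] by simp
    ultimately have "q = m" by (rule minimal)
    then have "m v \<le> m (v + 1 *\<^sub>R a) - 1 * m a" using le[of 1 v] by simp
    then show ?thesis by simp
  qed
  have add: "m (v + w) = m v + m w" for v w
    using sup[of v w] sm unfolding sublin_def by (meson antisym)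
  have neg: "m (- v) = - m v" for v
    using add[of v "- v"] sublin_0[OF sm p0] by simp
  show ?thesis
  proof (rule linearI)
    show "m (b1 + b2) = m b1 + m b2" for b1 b2 by (rule add)
    show "m (r *\<^sub>R b) = r *\<^sub>R m b" for r b
    proof (cases "r \<ge> 0")
      case True then show ?thesis using sublin_hom[OF sm p0 True] by simp
    next
      case False
      then have "m ((- r) *\<^sub>R b) = (- r) * m b" using sublin_hom[OF sm p0, of "- r"] by simp
      then show ?thesis using neg[of "r *\<^sub>R b"] by simp
    qed
  qed
qed

lemma hahn_banach_sublinear:
  fixes p :: "'a::real_vector \<Rightarrow> real"
  assumes sub: "\<And>v w. p (v + w) \<le> p v + p w"
    and hom: "\<And>c v. c > 0 \<Longrightarrow> p (c *\<^sub>R v) \<le> c * p v"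
    and p0: "p 0 \<le> 0"
  shows "\<exists>f. linear f \<and> (\<forall>v. f v \<le> p v)"
proof -
  define r where "r = {(q, q'). sublin p q \<and> sublin p q' \<and> (\<forall>v. q' v \<le> q v)}"
  have sp: "sublin p p" unfolding sublin_def using sub hom by auto
  have F: "Field r = {q. sublin p q}"
    unfolding r_def Field_def by auto
  have po: "Partial_order r"
    unfolding partial_order_on_def preorder_on_def refl_on_def trans_def antisym_def F
    by (auto simp: r_def intro: order_trans) (meson antisym ext)
  have ub: "\<exists>u\<in>Field r. \<forall>a\<in>C. (a, u) \<in> r" if C: "C \<in> Chains r" for C
  proof -
    define A where "A = insert p C"
    have Asub: "sublin p q" if "q \<in> A" for q
      using that C sp unfolding A_def Chains_def r_def by auto
    have Ach: "(\<forall>v. q1 v \<le> q2 v) \<or> (\<forall>v. q2 v \<le> q1 v)" if "q1 \<in> A" "q2 \<in> A" for q1 q2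
    proof -
      have "q \<in> C \<Longrightarrow> (\<forall>v. q v \<le> p v)" for q using C unfolding Chains_def r_def sublin_def by auto
      moreover have "(q1, q2) \<in> r \<or> (q2, q1) \<in> r" if "q1 \<in> C" "q2 \<in> C"
        using that C unfolding Chains_def by blast
      ultimately show ?thesis using that unfolding A_def r_def by blast
    qed
    define u where "u v = (INF q\<in>A. q v)" for v
    have bdd: "bdd_below ((\<lambda>q. q v) ` A)" for v
      by (rule bdd_belowI2[where m="- p (- v)"]) (use Asub sublin_lb p0 in blast)
    have le: "u v \<le> q v" if "q \<in> A" for q v
      unfolding u_def by (rule cINF_lower[OF bdd that])
    have ge: "z \<le> u v" if "\<And>q. q \<in> A \<Longrightarrow> z \<le> q v" for z v
      unfolding u_def by (rule cINF_greatest) (use that A_def in auto)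
    have "sublin p u"
      unfolding sublin_def
    proof (intro conjI allI impI)
      fix v w
      have "u (v + w) - q2 w \<le> u v" if q2: "q2 \<in> A" for q2
      proof (rule ge)
        fix q1 assume q1: "q1 \<in> A"
        show "u (v + w) - q2 w \<le> q1 v"
        proof (cases "\<forall>v. q1 v \<le> q2 v")
          case True
          have "u (v + w) \<le> q1 (v + w)" using le q1 by blast
          also have "\<dots> \<le> q1 v + q1 w" using Asub[OF q1] unfolding sublin_def by blast
          also have "\<dots> \<le> q1 v + q2 w" using True by simp
          finally show ?thesis by simp
        next
          case False
          then have True: "\<forall>v. q2 v \<le> q1 v" using Ach q1 q2 by blast
          have "u (v + w) \<le> q2 (v + w)" using le q2 by blast
          also have "\<dots> \<le> q2 v + q2 w" using Asub[OF q2] unfolding sublin_def by blast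
          also have "\<dots> \<le> q1 v + q2 w" using True by simp
          finally show ?thesis by simp
        qed
      qed
      then have "u (v + w) - u v \<le> q2 w" if "q2 \<in> A" for q2 using that by fastforce
      then have "u (v + w) - u v \<le> u w" by (rule ge)
      then show "u (v + w) \<le> u v + u w" by simp
    next
      fix c :: real and v assume c: "c > 0"
      have "u (c *\<^sub>R v) / c \<le> u v"
      proof (rule ge)
        fix q assume q: "q \<in> A"
        have "u (c *\<^sub>R v) \<le> q (c *\<^sub>R v)" using le q by blast
        also have "\<dots> \<le> c * q v" using Asub[OF q] c unfolding sublin_def by blast
        finally show "u (c *\<^sub>R v) / c \<le> q v" using c by (simp add: field_simps)
      qed
      then show "u (c *\<^sub>R v) \<le> c * u v" using c by (simp add: field_simps)
    next
      fix v show "u v \<le> p v" using le[of p v] A_def by simp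
    qed
    moreover have "(a, u) \<in> r" if "a \<in> C" for a
      using that \<open>sublin p u\<close> Asub le A_def unfolding r_def by auto
    ultimately show ?thesis unfolding F by auto
  qed
  obtain m where m: "m \<in> Field r" and mmax: "\<forall>a\<in>Field r. (m, a) \<in> r \<longrightarrow> a = m"
    using Zorns_po_lemma[OF po ub] by blast
  have sm: "sublin p m" using m F by simp
  have "linear m"
  proof (rule sublin_minimal_linear[OF sm p0])
    fix q assume "sublin p q" "\<forall>v. q v \<le> m v"
    then have "(m, q) \<in> r" "q \<in> Field r" using sm F unfolding r_def by auto
    then show "q = m" using mmax by blast
  qed
  moreover have "\<forall>v. m v \<le> p v" using sm unfolding sublin_def by blast
  ultimately show ?thesis by blast
qed

lemma separation_point:
  fixes Cl :: "'a::real_normed_vector set"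
  assumes cl: "closed Cl" and cv: "convex Cl" and xn: "x \<notin> Cl"
  shows "\<exists>w::'a \<Rightarrow>\<^sub>L real. \<exists>\<delta>>0. \<forall>z\<in>Cl. blinfun_apply w (x - z) \<ge> \<delta>"
proof (cases "Cl = {}")
  case True
  then show ?thesis by (intro exI[of _ 0] exI[of _ "1::real"]) auto
next
  case False
  then obtain z0 where z0: "z0 \<in> Cl" by blast
  define d where "d = infdist x Cl"
  have dpos: "d > 0" unfolding d_def using infdist_pos_not_in_closed[OF cl False xn] .
  have dz: "d \<le> norm (x - z)" if "z \<in> Cl" for z
    using infdist_le[OF that, of x] unfolding d_def by (simp add: dist_norm)
  define e where "e v y = norm (v + fst y *\<^sub>R (x - snd y)) - fst y * d" for v and y :: "real \<times> 'a"
  define I where "I = {0::real..} \<times> Cl"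
  define p where "p v = (INF y\<in>I. e v y)" for v
  have Ine: "I \<noteq> {}" unfolding I_def using z0 by auto
  have elb: "- norm v \<le> e v y" if yI: "y \<in> I" for v y
  proof -
    obtain t z where y: "y = (t, z)" "t \<ge> 0" "z \<in> Cl" using yI unfolding I_def by auto
    have "t * d \<le> t * norm (x - z)" using dz[OF y(3)] y(2) by (rule mult_left_mono)
    also have "\<dots> = norm (t *\<^sub>R (x - z))" using y(2) by simp
    also have "\<dots> = norm ((v + t *\<^sub>R (x - z)) - v)" by simp
    also have "\<dots> \<le> norm (v + t *\<^sub>R (x - z)) + norm v" by (rule norm_triangle_ineq4)
    finally show ?thesis unfolding e_def y by simp
  qed
  have bdd: "bdd_below ((\<lambda>y. e v y) ` I)" for v
    by (rule bdd_belowI2[where m="- norm v"]) (use elb in blast)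
  have ple: "p v \<le> e v y" if "y \<in> I" for v y
    unfolding p_def by (rule cINF_lower[OF bdd that])
  have pge: "m \<le> p v" if "\<And>y. y \<in> I \<Longrightarrow> m \<le> e v y" for m v
    unfolding p_def by (rule cINF_greatest[OF Ine]) (use that in auto)
  have psub: "p (v + w) \<le> p v + p w" for v w
  proof -
    have "p (v + w) - e w y2 \<le> p v" if y2: "y2 \<in> I" for y2
    proof (rule pge)
      fix y1 assume y1: "y1 \<in> I"
      obtain t z where y1e: "y1 = (t, z)" "t \<ge> 0" "z \<in> Cl" using y1 unfolding I_def by auto
      obtain s z' where y2e: "y2 = (s, z')" "s \<ge> 0" "z' \<in> Cl" using y2 unfolding I_def by auto
      have "\<exists>z''\<in>Cl. (t + s) *\<^sub>R (x - z'') = t *\<^sub>R (x - z) + s *\<^sub>R (x - z')"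
      proof (cases "t + s = 0")
        case True
        then have "t = 0" "s = 0" using y1e y2e by auto
        then show ?thesis using y1e by auto
      next
        case False
        then have ts: "t + s > 0" using y1e y2e by auto
        define z'' where "z'' = (t / (t + s)) *\<^sub>R z + (s / (t + s)) *\<^sub>R z'"
        have sum1: "t / (t + s) + s / (t + s) = 1" using ts by (simp add: add_divide_distrib[symmetric])
        have zin: "z'' \<in> Cl" unfolding z''_def
          using cv y1e(2,3) y2e(2,3) ts sum1 unfolding convex_def by simp
        have h: "(t + s) *\<^sub>R z'' = t *\<^sub>R z + s *\<^sub>R z'"
          using ts unfolding z''_def by (simp add: scaleR_add_right)
        have "(t + s) *\<^sub>R (x - z'') = (t + s) *\<^sub>R x - (t + s) *\<^sub>R z''" by (rule scaleR_diff_right)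
        also have "\<dots> = (t + s) *\<^sub>R x - (t *\<^sub>R z + s *\<^sub>R z')" using h by simp
        also have "\<dots> = t *\<^sub>R (x - z) + s *\<^sub>R (x - z')" by (simp add: algebra_simps)
        finally have "(t + s) *\<^sub>R (x - z'') = t *\<^sub>R (x - z) + s *\<^sub>R (x - z')" .
        with zin show ?thesis by blast
      qed
      then obtain z'' where z'': "z'' \<in> Cl" "(t + s) *\<^sub>R (x - z'') = t *\<^sub>R (x - z) + s *\<^sub>R (x - z')"
        by blast
      have "(t + s, z'') \<in> I" using z'' y1e y2e unfolding I_def by auto
      then have "p (v + w) \<le> e (v + w) (t + s, z'')" by (rule ple)
      also have "\<dots> = norm ((v + t *\<^sub>R (x - z)) + (w + s *\<^sub>R (x - z'))) - t * d - s * d"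
        unfolding e_def using z''(2) by (simp add: algebra_simps)
      also have "\<dots> \<le> e v y1 + e w y2"
        unfolding e_def y1e y2e using norm_triangle_ineq by simp
      finally show "p (v + w) - e w y2 \<le> e v y1" by simp
    qed
    then have "p (v + w) - p v \<le> e w y2" if "y2 \<in> I" for y2 using that by fastforce
    then have "p (v + w) - p v \<le> p w" by (rule pge)
    then show ?thesis by simp
  qed
  have phom: "p (c *\<^sub>R v) \<le> c * p v" if c: "c > 0" for c v
  proof -
    have "p (c *\<^sub>R v) / c \<le> p v"
    proof (rule pge)
      fix y assume y: "y \<in> I"
      obtain t z where ye: "y = (t, z)" "t \<ge> 0" "z \<in> Cl" using y unfolding I_def by auto
      have "(c * t, z) \<in> I" using ye c unfolding I_def by auto
      then have "p (c *\<^sub>R v) \<le> e (c *\<^sub>R v) (c * t, z)" by (rule ple)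
      also have "\<dots> = c * e v y"
      proof -
        have "c *\<^sub>R v + (c * t) *\<^sub>R (x - z) = c *\<^sub>R (v + t *\<^sub>R (x - z))"
          by (simp add: algebra_simps)
        then have "norm (c *\<^sub>R v + (c * t) *\<^sub>R (x - z)) = c * norm (v + t *\<^sub>R (x - z))"
          using c by simp
        then show ?thesis unfolding e_def ye fst_conv snd_conv by (simp add: right_diff_distrib)
      qed
      finally show "p (c *\<^sub>R v) / c \<le> e v y" using c by (simp add: field_simps)
    qed
    then show ?thesis using c by (simp add: field_simps)
  qed
  have p0: "p 0 \<le> 0"
  proof -
    have "(0, z0) \<in> I" using z0 unfolding I_def by auto
    then show ?thesis using ple[of "(0, z0)" 0] unfolding e_def by simp
  qed
  obtain f where lin: "linear f" and fp: "\<forall>v. f v \<le> p v"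
    using hahn_banach_sublinear[of p, OF psub phom p0] by blast
  have fn: "f v \<le> norm v" for v
  proof -
    have "(0, z0) \<in> I" using z0 unfolding I_def by auto
    then have "p v \<le> norm v" using ple[of "(0, z0)" v] unfolding e_def by simp
    then show ?thesis using fp order_trans by blast
  qed
  have fneg: "f (- v) = - f v" for v using lin by (simp add: linear_neg)
  have bl: "bounded_linear f"
  proof (rule bounded_linear_intro[where K=1])
    show "f (a + b) = f a + f b" for a b using lin by (simp add: linear_add)
    show "f (r *\<^sub>R a) = r *\<^sub>R f a" for r a using lin by (simp add: linear_scale)
    show "norm (f a) \<le> norm a * 1" for a
      using fn[of a] fn[of "- a"] fneg[of a] by auto
  qed
  have "d \<le> f (x - z)" if z: "z \<in> Cl" for z
  proof -
    have "(1, z) \<in> I" using z unfolding I_def by auto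
    then have "p (- (x - z)) \<le> - d" using ple[of "(1, z)" "- (x - z)"] unfolding e_def by simp
    then show ?thesis using fp[rule_format, of "- (x - z)"] fneg[of "x - z"] by linarith
  qed
  then have "\<forall>z\<in>Cl. blinfun_apply (Blinfun f) (x - z) \<ge> d"
    using bounded_linear_Blinfun_apply[OF bl] by simp
  then show ?thesis using dpos by blast
qed



lemma sup_fin:
  fixes f :: "'b \<Rightarrow> ereal"
  shows "(SUP y\<in>A. f y) < \<infinity> \<longleftrightarrow> (\<exists>M. \<forall>y\<in>A. f y \<le> ereal M)"
proof
  assume a: "(SUP y\<in>A. f y) < \<infinity>"
  define S where "S = (SUP y\<in>A. f y)"
  have "S \<le> ereal (real_of_ereal S)" using a unfolding S_def[symmetric] by (cases S) auto
  then have "\<forall>y\<in>A. f y \<le> ereal (real_of_ereal S)" unfolding S_def by (meson SUP_upper order_trans)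
  then show "\<exists>M. \<forall>y\<in>A. f y \<le> ereal M" by blast
next
  assume "\<exists>M. \<forall>y\<in>A. f y \<le> ereal M"
  then obtain M where "\<forall>y\<in>A. f y \<le> ereal M" by blast
  then have "(SUP y\<in>A. f y) \<le> ereal M" by (simp add: SUP_least)
  then show "(SUP y\<in>A. f y) < \<infinity>" using order_le_less_trans by fastforce
qed

lemma blin_swap: "blinfun_apply (a - b) (u - v) = blinfun_apply (b - a) (v - u)"
  by (simp add: blinfun.diff_left blinfun.diff_right)

lemma dom_fitz_iff:
  "(x, xs) \<in> dom_fitzpatrick T \<longleftrightarrow>
     (\<exists>M. \<forall>(z, zs)\<in>graph_op T. blinfun_apply (xs - zs) (z - x) \<le> M)"
proof -
  define S where "S = (SUP (z, zs)\<in>graph_op T. ereal (blinfun_apply (xs - zs) (z - x)))"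
  have fe: "fitzpatrick T x xs = S + ereal (blinfun_apply xs x)"
    unfolding fitzpatrick_def S_def by simp
  have "(x, xs) \<in> dom_fitzpatrick T \<longleftrightarrow> S + ereal (blinfun_apply xs x) < \<infinity>"
    by (simp add: dom_fitzpatrick_def fe)
  also have "\<dots> \<longleftrightarrow> S < \<infinity>" by (cases S) auto
  also have "\<dots> \<longleftrightarrow> (\<exists>M. \<forall>(z, zs)\<in>graph_op T. blinfun_apply (xs - zs) (z - x) \<le> M)"
    unfolding S_def sup_fin by (simp add: case_prod_beta)
  finally show ?thesis .
qed

lemma fitz_alt:
  "(x, xs) \<in> dom_fitzpatrick T \<longleftrightarrow>
     (\<exists>M. \<forall>(z, zs)\<in>graph_op T. blinfun_apply xs z + blinfun_apply zs x - blinfun_apply zs z \<le> M)"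
proof -
  have e: "blinfun_apply (xs - zs) (z - x) = blinfun_apply xs z + blinfun_apply zs x - blinfun_apply zs z
      - blinfun_apply xs x" for zs z
    by (simp add: blinfun.diff_left blinfun.diff_right)
  show ?thesis unfolding dom_fitz_iff e
  proof
    assume "\<exists>M. \<forall>(z, zs)\<in>graph_op T. blinfun_apply xs z + blinfun_apply zs x - blinfun_apply zs z - blinfun_apply xs x \<le> M"
    then obtain M where "\<forall>(z, zs)\<in>graph_op T. blinfun_apply xs z + blinfun_apply zs x - blinfun_apply zs z - blinfun_apply xs x \<le> M" by blast
    then have "\<forall>(z, zs)\<in>graph_op T. blinfun_apply xs z + blinfun_apply zs x - blinfun_apply zs z \<le> M + blinfun_apply xs x"
      by auto
    then show "\<exists>M. \<forall>(z, zs)\<in>graph_op T. blinfun_apply xs z + blinfun_apply zs x - blinfun_apply zs z \<le> M" by blast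
  next
    assume "\<exists>M. \<forall>(z, zs)\<in>graph_op T. blinfun_apply xs z + blinfun_apply zs x - blinfun_apply zs z \<le> M"
    then obtain M where "\<forall>(z, zs)\<in>graph_op T. blinfun_apply xs z + blinfun_apply zs x - blinfun_apply zs z \<le> M" by blast
    then have "\<forall>(z, zs)\<in>graph_op T. blinfun_apply xs z + blinfun_apply zs x - blinfun_apply zs z - blinfun_apply xs x \<le> M - blinfun_apply xs x"
      by auto
    then show "\<exists>M. \<forall>(z, zs)\<in>graph_op T. blinfun_apply xs z + blinfun_apply zs x - blinfun_apply zs z - blinfun_apply xs x \<le> M" by blast
  qed
qed

lemma convex_fitz: "convex (fst ` dom_fitzpatrick T)"
  unfolding convex_def
proof (intro ballI allI impI)
  fix x1 x2 and u v :: real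
  assume x1: "x1 \<in> fst ` dom_fitzpatrick T" and x2: "x2 \<in> fst ` dom_fitzpatrick T"
    and uv: "0 \<le> u" "0 \<le> v" "u + v = 1"
  obtain xs1 M1 where b1: "\<forall>(z, zs)\<in>graph_op T. blinfun_apply xs1 z + blinfun_apply zs x1 - blinfun_apply zs z \<le> M1"
  proof -
    from x1 obtain q where "q \<in> dom_fitzpatrick T" "x1 = fst q" by blast
    then have "(x1, snd q) \<in> dom_fitzpatrick T" by simp
    then show ?thesis using that unfolding fitz_alt by blast
  qed
  obtain xs2 M2 where b2: "\<forall>(z, zs)\<in>graph_op T. blinfun_apply xs2 z + blinfun_apply zs x2 - blinfun_apply zs z \<le> M2"
  proof -
    from x2 obtain q where "q \<in> dom_fitzpatrick T" "x2 = fst q" by blast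
    then have "(x2, snd q) \<in> dom_fitzpatrick T" by simp
    then show ?thesis using that unfolding fitz_alt by blast
  qed
  have "\<forall>(z, zs)\<in>graph_op T. blinfun_apply (u *\<^sub>R xs1 + v *\<^sub>R xs2) z + blinfun_apply zs (u *\<^sub>R x1 + v *\<^sub>R x2)
          - blinfun_apply zs z \<le> u * M1 + v * M2"
  proof (clarify)
    fix z zs assume g: "(z, zs) \<in> graph_op T"
    define A1 where "A1 = blinfun_apply xs1 z + blinfun_apply zs x1 - blinfun_apply zs z"
    define A2 where "A2 = blinfun_apply xs2 z + blinfun_apply zs x2 - blinfun_apply zs z"
    have "u * A1 \<le> u * M1" using b1 g uv unfolding A1_def by (auto intro: mult_left_mono)
    moreover have "v * A2 \<le> v * M2" using b2 g uv unfolding A2_def by (auto intro: mult_left_mono)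
    moreover have "blinfun_apply (u *\<^sub>R xs1 + v *\<^sub>R xs2) z + blinfun_apply zs (u *\<^sub>R x1 + v *\<^sub>R x2)
          - blinfun_apply zs z = u * A1 + v * A2"
    proof -
      have zz: "blinfun_apply zs z = u * blinfun_apply zs z + v * blinfun_apply zs z"
        using uv by (metis distrib_right mult_1)
      have "blinfun_apply (u *\<^sub>R xs1 + v *\<^sub>R xs2) z + blinfun_apply zs (u *\<^sub>R x1 + v *\<^sub>R x2)
         = u * blinfun_apply xs1 z + v * blinfun_apply xs2 z + u * blinfun_apply zs x1 + v * blinfun_apply zs x2"
        by (simp add: blinfun.add_left blinfun.add_right blinfun.scaleR_left blinfun.scaleR_right)
      moreover have "u * A1 + v * A2 = u * blinfun_apply xs1 z + v * blinfun_apply xs2 z + u * blinfun_apply zs x1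
           + v * blinfun_apply zs x2 - (u * blinfun_apply zs z + v * blinfun_apply zs z)"
        unfolding A1_def A2_def by (simp add: distrib_left right_diff_distrib)
      ultimately show ?thesis using zz by linarith
    qed
    ultimately show "blinfun_apply (u *\<^sub>R xs1 + v *\<^sub>R xs2) z + blinfun_apply zs (u *\<^sub>R x1 + v *\<^sub>R x2)
          - blinfun_apply zs z \<le> u * M1 + v * M2" by linarith
  qed
  then have "(u *\<^sub>R x1 + v *\<^sub>R x2, u *\<^sub>R xs1 + v *\<^sub>R xs2) \<in> dom_fitzpatrick T"
    unfolding fitz_alt by blast
  then show "u *\<^sub>R x1 + v *\<^sub>R x2 \<in> fst ` dom_fitzpatrick T" by force
qed

lemma dom_sub_fitz:
  assumes mono: "monotone_op T"
  shows "dom_op T \<subseteq> fst ` dom_fitzpatrick T"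
proof
  fix z assume "z \<in> dom_op T"
  then obtain zs where zs: "zs \<in> T z" unfolding dom_op_def by auto
  have "\<forall>(w, ws)\<in>graph_op T. blinfun_apply (zs - ws) (w - z) \<le> 0"
  proof clarify
    fix w ws assume "(w, ws) \<in> graph_op T"
    then have "blinfun_apply (ws - zs) (w - z) \<ge> 0" using mono zs unfolding monotone_op_def graph_op_def by auto
    moreover have "blinfun_apply (zs - ws) (w - z) = - blinfun_apply (ws - zs) (w - z)"
      by (simp add: blinfun.diff_left)
    ultimately show "blinfun_apply (zs - ws) (w - z) \<le> 0" by simp
  qed
  then have "(z, zs) \<in> dom_fitzpatrick T" unfolding dom_fitz_iff by blast
  then show "z \<in> fst ` dom_fitzpatrick T" by force
qed

theorem theorem1p3:
  fixes T :: "'a::banach \<Rightarrow> ('a \<Rightarrow>\<^sub>L real) set"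
  assumes mono: "monotone_op T"
    and bdd: "bounded (dom_op T)"
  defines "C1 \<equiv> (\<forall>x. x \<notin> closure (dom_op T) \<longrightarrow>
              (SUP (z, zs)\<in>graph_op T. ereal (blinfun_apply zs (x - z) / norm (x - z))) = \<infinity>)"
    and "C2 \<equiv> fst ` dom_fitzpatrick T \<subseteq> closure (dom_op T)"
    and "C3 \<equiv> (closure (dom_op T) = closure (convex hull (dom_op T)) \<and>
               closure (convex hull (dom_op T)) = closure (fst ` dom_fitzpatrick T))"
    and "C4 \<equiv> convex (closure (dom_op T))"
  shows "(C1 \<longleftrightarrow> C2) \<and> (C2 \<longleftrightarrow> C3) \<and> (C1 \<longrightarrow> C4) \<and> (C2 \<longrightarrow> C4) \<and> (C3 \<longrightarrow> C4)
         \<and> (maximal_monotone_op T \<longrightarrow> (C4 \<longleftrightarrow> C1) \<and> (C4 \<longleftrightarrow> C2) \<and> (C4 \<longleftrightarrow> C3))"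
proof -
  define D where "D = dom_op T"
  define G where "G = graph_op T"
  define F where "F = fst ` dom_fitzpatrick T"
  have GD: "z \<in> D" if "(z, zs) \<in> G" for z zs
    using that unfolding G_def D_def graph_op_def dom_op_def by auto
  have DF: "D \<subseteq> F" unfolding D_def F_def by (rule dom_sub_fitz[OF mono])
  have cF: "convex F" unfolding F_def by (rule convex_fitz)
  have Fmem: "x \<in> F \<longleftrightarrow> (\<exists>xs M. \<forall>(z, zs)\<in>G. blinfun_apply (xs - zs) (z - x) \<le> M)" for x
  proof
    assume "x \<in> F"
    then obtain q where "q \<in> dom_fitzpatrick T" "x = fst q" unfolding F_def by blast
    then have "(x, snd q) \<in> dom_fitzpatrick T" by simp
    then show "\<exists>xs M. \<forall>(z, zs)\<in>G. blinfun_apply (xs - zs) (z - x) \<le> M"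
      unfolding dom_fitz_iff G_def by blast
  next
    assume "\<exists>xs M. \<forall>(z, zs)\<in>G. blinfun_apply (xs - zs) (z - x) \<le> M"
    then obtain xs where "(x, xs) \<in> dom_fitzpatrick T" unfolding dom_fitz_iff G_def by blast
    then show "x \<in> F" unfolding F_def by force
  qed
  have c12: "C2" if c1: "C1"
    unfolding C2_def F_def[symmetric] D_def[symmetric]
  proof
    fix x assume xF: "x \<in> F"
    show "x \<in> closure D"
    proof (rule ccontr)
      assume xn: "x \<notin> closure D"
      then have sup: "(SUP (z, zs)\<in>G. ereal (blinfun_apply zs (x - z) / norm (x - z))) = \<infinity>"
        using c1 unfolding C1_def G_def D_def by blast
      obtain xs M where B: "\<forall>(z, zs)\<in>G. blinfun_apply (xs - zs) (z - x) \<le> M"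
        using xF Fmem by blast
      show False
      proof (cases "closure D = {}")
        case True
        then have "G = {}" using GD by auto
        then show False using sup by (simp add: bot_ereal_def)
      next
        case False
        define d where "d = infdist x (closure D)"
        have dpos: "d > 0" unfolding d_def using infdist_pos_not_in_closed[OF closed_closure False xn] .
        define K where "K = \<bar>M\<bar> / d + norm xs"
        have "\<forall>(z, zs)\<in>G. ereal (blinfun_apply zs (x - z) / norm (x - z)) \<le> ereal K"
        proof clarify
          fix z zs assume g: "(z, zs) \<in> G"
          define n where "n = norm (x - z)"
          have "z \<in> closure D" using GD[OF g] closure_subset by blast
          then have dn: "d \<le> n" unfolding d_def n_def using infdist_le[of z "closure D" x] by (simp add: dist_norm)
          then have npos: "n > 0" using dpos by simp
          have e: "blinfun_apply zs (x - z) = blinfun_apply (xs - zs) (z - x) - blinfun_apply xs (z - x)"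
            by (simp add: blinfun.diff_left blinfun.diff_right)
          have "- blinfun_apply xs (z - x) \<le> norm xs * n"
            using norm_blinfun[of xs "z - x"] unfolding n_def by (simp add: norm_minus_commute)
          then have 1: "blinfun_apply zs (x - z) \<le> M + norm xs * n" using B g e by auto
          have "\<bar>M\<bar> * d \<le> \<bar>M\<bar> * n" using dn by (simp add: mult_left_mono)
          then have "\<bar>M\<bar> \<le> \<bar>M\<bar> / d * n" using dpos by (simp add: field_simps)
          then have "blinfun_apply zs (x - z) \<le> K * n" using 1 unfolding K_def by (simp add: distrib_right)
          then have "blinfun_apply zs (x - z) / n \<le> K" using npos by (simp add: pos_divide_le_eq)
          then show "ereal (blinfun_apply zs (x - z) / norm (x - z)) \<le> ereal K" unfolding n_def by simp
        qed
        then have "(SUP (z, zs)\<in>G. ereal (blinfun_apply zs (x - z) / norm (x - z))) < \<infinity>"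
          unfolding sup_fin by (intro exI[of _ K]) (simp add: case_prod_beta)
        then show False using sup by simp
      qed
    qed
  qed
  have c21: "C1" if c2: "C2"
    unfolding C1_def G_def[symmetric] D_def[symmetric]
  proof (intro allI impI)
    fix x assume xn: "x \<notin> closure D"
    show "(SUP (z, zs)\<in>G. ereal (blinfun_apply zs (x - z) / norm (x - z))) = \<infinity>"
    proof (rule ccontr)
      assume "(SUP (z, zs)\<in>G. ereal (blinfun_apply zs (x - z) / norm (x - z))) \<noteq> \<infinity>"
      then have "(SUP (z, zs)\<in>G. ereal (blinfun_apply zs (x - z) / norm (x - z))) < \<infinity>"
        by (simp add: less_top)
      then obtain K where K: "\<forall>y\<in>G. (case y of (z, zs) \<Rightarrow> ereal (blinfun_apply zs (x - z) / norm (x - z))) \<le> ereal K"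
        unfolding sup_fin by blast
      then have K: "\<forall>(z, zs)\<in>G. ereal (blinfun_apply zs (x - z) / norm (x - z)) \<le> ereal K"
        by (simp add: case_prod_beta)
      obtain B where B: "\<forall>z\<in>D. norm z \<le> B" using bdd unfolding D_def bounded_iff by blast
      have "\<forall>(z, zs)\<in>G. blinfun_apply (0 - zs) (z - x) \<le> \<bar>K\<bar> * (norm x + B)"
      proof clarify
        fix z zs assume g: "(z, zs) \<in> G"
        define n where "n = norm (x - z)"
        have "z \<in> closure D" using GD[OF g] closure_subset by blast
        then have "z \<noteq> x" using xn by blast
        then have npos: "n > 0" unfolding n_def by simp
        have "blinfun_apply zs (x - z) / n \<le> K" using K g unfolding n_def by auto
        then have "blinfun_apply zs (x - z) \<le> K * n" using npos by (simp add: pos_divide_le_eq)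
        also have "\<dots> \<le> \<bar>K\<bar> * n" using npos by (simp add: mult_right_mono)
        also have "\<dots> \<le> \<bar>K\<bar> * (norm x + B)"
        proof (rule mult_left_mono)
          show "n \<le> norm x + B" unfolding n_def using B GD[OF g] norm_triangle_ineq4[of x z] by force
        qed simp
        finally show "blinfun_apply (0 - zs) (z - x) \<le> \<bar>K\<bar> * (norm x + B)"
          by (simp add: blinfun.diff_right blinfun.minus_left)
      qed
      then have "x \<in> F" using Fmem by blast
      then show False using c2 xn unfolding C2_def F_def D_def by blast
    qed
  qed
  have c23: "C3" if c2: "C2"
  proof -
    have 1: "closure D \<subseteq> closure (convex hull D)" by (simp add: closure_mono hull_subset)
    have "convex hull D \<subseteq> F" using DF cF by (simp add: hull_minimal)
    then have 2: "closure (convex hull D) \<subseteq> closure F" by (rule closure_mono)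
    have 3: "closure F \<subseteq> closure D" using c2 unfolding C2_def F_def[symmetric] D_def[symmetric]
      by (simp add: closure_minimal)
    show ?thesis unfolding C3_def F_def[symmetric] D_def[symmetric] using 1 2 3 by blast
  qed
  have c32: "C2" if c3: "C3"
  proof -
    have "F \<subseteq> closure F" by (rule closure_subset)
    moreover have "closure F = closure D" using c3 unfolding C3_def F_def D_def by simp
    ultimately show ?thesis unfolding C2_def F_def D_def by simp
  qed
  have c34: "C4" if c3: "C3"
  proof -
    have "closure D = closure (convex hull D)" using c3 unfolding C3_def D_def by simp
    moreover have "convex (closure (convex hull D))" by (rule convex_closure[OF convex_convex_hull])
    ultimately show ?thesis unfolding C4_def D_def by simp
  qed
  have c42: "C2" if c4: "C4" and mm: "maximal_monotone_op T"
    unfolding C2_def F_def[symmetric] D_def[symmetric]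
  proof
    fix x assume xF: "x \<in> F"
    show "x \<in> closure D"
    proof (rule ccontr)
      assume xn: "x \<notin> closure D"
      have c4': "convex (closure D)" using c4 unfolding C4_def D_def .
      have "\<exists>w::'a \<Rightarrow>\<^sub>L real. \<exists>\<delta>>0. \<forall>z\<in>closure D. blinfun_apply w (x - z) \<ge> \<delta>"
        by (rule separation_point[OF closed_closure c4' xn])
      then obtain w :: "'a \<Rightarrow>\<^sub>L real" and \<delta> :: real where dpos: "\<delta> > 0" and wsep: "\<forall>z\<in>closure D. blinfun_apply w (x - z) \<ge> \<delta>"
        by auto
      obtain xs M where B: "\<forall>(z, zs)\<in>G. blinfun_apply (xs - zs) (z - x) \<le> M"
        using xF Fmem by blast
      define t where "t = (\<bar>M\<bar> + 1) / \<delta>"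
      define ys where "ys = xs + t *\<^sub>R w"
      have "\<exists>(z, zs)\<in>G. blinfun_apply (ys - zs) (x - z) < 0"
      proof (rule ccontr)
        assume "\<not> (\<exists>(z, zs)\<in>G. blinfun_apply (ys - zs) (x - z) < 0)"
        then have pos: "\<forall>(z, zs)\<in>G. blinfun_apply (ys - zs) (x - z) \<ge> 0" by auto
        define S where "S y = (if y = x then insert ys (T y) else T y)" for y
        have gS: "graph_op S = insert (x, ys) G"
          unfolding G_def graph_op_def S_def by (auto split: if_splits)
        have "monotone_op S"
          unfolding monotone_op_def gS
        proof (clarify)
          fix a1 a2 b1 b2 assume a: "(a1, a2) \<in> insert (x, ys) G" and b: "(b1, b2) \<in> insert (x, ys) G"
          show "0 \<le> blinfun_apply (a2 - b2) (a1 - b1)"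
          proof -
            { assume "(a1, a2) \<in> G" "(b1, b2) \<in> G"
              then have ?thesis using mono unfolding monotone_op_def G_def by fastforce }
            moreover { assume "(a1, a2) = (x, ys)" "(b1, b2) \<in> G"
              then have ?thesis using pos by auto }
            moreover { assume "(a1, a2) \<in> G" "(b1, b2) = (x, ys)"
              then have ?thesis using pos blin_swap[of a2 ys a1 x] by auto }
            moreover { assume "(a1, a2) = (x, ys)" "(b1, b2) = (x, ys)"
              then have ?thesis by simp }
            ultimately show ?thesis using a b by blast
          qed
        qed
        moreover have "graph_op T \<subseteq> graph_op S" unfolding gS G_def by blast
        ultimately have "graph_op S = graph_op T" using mm unfolding maximal_monotone_op_def by blast
        then have "(x, ys) \<in> G" using gS G_def by blast
        then have "x \<in> D" by (rule GD)
        then show False using xn closure_subset by blast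
      qed
      then obtain z zs where g: "(z, zs) \<in> G" and neg: "blinfun_apply (ys - zs) (x - z) < 0" by blast
      have "z \<in> closure D" using GD[OF g] closure_subset by blast
      then have wz: "blinfun_apply w (x - z) \<ge> \<delta>" using wsep by blast
      have e: "blinfun_apply (ys - zs) (x - z) = - blinfun_apply (xs - zs) (z - x) + t * blinfun_apply w (x - z)"
        unfolding ys_def
        by (simp add: blinfun.diff_left blinfun.diff_right blinfun.add_left blinfun.scaleR_left right_diff_distrib)
      have "t * \<delta> \<le> t * blinfun_apply w (x - z)"
      proof (rule mult_left_mono[OF wz])
        show "0 \<le> t" unfolding t_def using dpos by simp
      qed
      moreover have "t * \<delta> = \<bar>M\<bar> + 1" unfolding t_def using dpos by simp
      moreover have "blinfun_apply (xs - zs) (z - x) \<le> M" using B g by auto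
      ultimately show False using e neg abs_ge_self[of M] by linarith
    qed
  qed
  show ?thesis
    using c12 c21 c23 c32 c34 c42 by blast
qed

end
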